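(* Let $a,b,G\in C^0(\mathbb{R})$ be even functions with $a,b>0$. Let $m>0$ and suppose $G(s)\ge G(m)$ for all $s\in\mathbb{R}$ and $G(s)>G(m)$ for all $s\in(-m,m)$. If there exists a sequence of bounded intervals $J_n\subset\mathbb{R}$ with $$\int_{J_n}\frac1a\to+\infty\quad\text{and}\quad \int_{J_n}b\to 0,$$ then there exists $L_0>0$ such that for every $L>L_0$ the functional $\mathcal{E}(\cdot,(-L,L))$ has no odd minimizers in $H^1_m((-L,L))$.
   Context: $H^1_m((-L,L)):=\{u\in H^1((-L,L)):u(-L)=-m,\ u(L)=m\}$ and $\mathcal{E}(u,(-L,L)):=\int_{-L}^L\{\tfrac12 (u')^2a(x)+G(u)b(x)\}\,dx$. A minimizer means an absolute minimizer of $\mathcal{E}(\cdot,(-L,L))$ over $H^1_m((-L,L))$. *)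

theory Defs
  imports "HOL-Analysis.Analysis"
begin

text \<open>One-dimensional Sobolev space H^1((-L,L)), identified (as usual) with the continuous
  representatives: u is an indefinite integral of a square-integrable function g on [-L,L]
  (g is the weak derivative of u).\<close>
definition H1 :: "real \<Rightarrow> (real \<Rightarrow> real) \<Rightarrow> bool" where
  "H1 L u \<longleftrightarrow> (\<exists>g. g \<in> borel_measurable lborel \<and>
      set_integrable lborel {-L..L} g \<and>
      set_integrable lborel {-L..L} (\<lambda>x. (g x)\<^sup>2) \<and>
      (\<forall>x\<in>{-L..L}. u x = u (-L) + (LBINT t=-L..x. g t)))"

definition H1m :: "real \<Rightarrow> real \<Rightarrow> (real \<Rightarrow> real) \<Rightarrow> bool" where
  "H1m m L u \<longleftrightarrow> H1 L u \<and> u (-L) = - m \<and> u L = m"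

text \<open>Energy; for u in H^1 the classical derivative exists a.e. and equals the weak one.\<close>
definition energy :: "(real \<Rightarrow> real) \<Rightarrow> (real \<Rightarrow> real) \<Rightarrow> (real \<Rightarrow> real) \<Rightarrow> real \<Rightarrow> (real \<Rightarrow> real) \<Rightarrow> real" where
  "energy a b G L u = (LBINT x=-L..L. (1/2) * (deriv u x)\<^sup>2 * a x + G (u x) * b x)"

definition is_minimizer :: "(real \<Rightarrow> real) \<Rightarrow> (real \<Rightarrow> real) \<Rightarrow> (real \<Rightarrow> real) \<Rightarrow> real \<Rightarrow> real \<Rightarrow> (real \<Rightarrow> real) \<Rightarrow> bool" where
  "is_minimizer a b G m L u \<longleftrightarrow> H1m m L u \<and>
     (\<forall>v. H1m m L v \<longrightarrow> energy a b G L u \<le> energy a b G L v)"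

definition odd_on :: "real \<Rightarrow> (real \<Rightarrow> real) \<Rightarrow> bool" where
  "odd_on L u \<longleftrightarrow> (\<forall>x\<in>{-L..L}. u (-x) = - u x)"

end

theory Submission
  imports Defs
begin

lemma deriv_nondiff:
  assumes "\<not> (\<exists>D. DERIV f x :> D)"
  shows "deriv f x = (SOME D::real. False)"
proof -
  have "(\<lambda>D. DERIV f x :> D) = (\<lambda>D. False)" using assms by auto
  then show ?thesis unfolding deriv_def by simp
qed

lemma deriv_borel:
  fixes f :: "real \<Rightarrow> real"
  assumes cf: "continuous_on UNIV f"
  shows "deriv f \<in> borel_measurable borel"
proof -
  define Q where "Q x h = (f (x+h) - f x) / h" for x h
  define C where "C n k = {x. \<forall>h h'. h \<noteq> 0 \<longrightarrow> h' \<noteq> 0 \<longrightarrow> \<bar>h\<bar> < 1/(real k+1) \<longrightarrow> \<bar>h'\<bar> < 1/(real k+1)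
        \<longrightarrow> \<bar>Q x h - Q x h'\<bar> \<le> 1/(real n+1)}" for n k :: nat
  define s where "s j x = Q x (1/(real j+2))" for j x
  define Ds where "Ds = {x. \<exists>D. DERIV f x :> D}"
  have contQ: "continuous_on UNIV (\<lambda>x. \<bar>Q x h - Q x h'\<bar>)" for h h'
  proof -
    have "continuous_on UNIV (\<lambda>x. Q x h)" for h
    proof (cases "h = 0")
      case True then show ?thesis by (simp add: Q_def)
    next
      case False then show ?thesis unfolding Q_def
        by (intro continuous_intros continuous_on_compose2[OF cf]) auto
    qed
    then show ?thesis by (intro continuous_intros)
  qed
  have closedC: "closed (C n k)" for n k
    unfolding C_def
    by (intro closed_Collect_all closed_Collect_imp open_Collect_less closed_Collect_le)
       (auto intro: continuous_intros contQ)
  have sD: "(\<lambda>j. s j x) \<longlonglongrightarrow> D" if "DERIV f x :> D" for x D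
  proof -
    have "(\<lambda>h. Q x h) \<midarrow>0\<rightarrow> D" using that unfolding DERIV_def Q_def .
    moreover have "(\<lambda>j. 1/(real j+2)) \<longlonglongrightarrow> 0"
    proof -
      have "(\<lambda>j. inverse (real (Suc (Suc j)))) \<longlonglongrightarrow> 0"
        using LIMSEQ_Suc[OF LIMSEQ_inverse_real_of_nat] .
      then show ?thesis by (simp add: field_simps add.commute)
    qed
    ultimately show ?thesis unfolding s_def
      using LIMSEQ_SEQ_conv[of 0 "\<lambda>h. Q x h" D] by (auto simp del: of_nat_Suc)
  qed
  have fwd: "\<exists>k. x \<in> C n k" if "DERIV f x :> D" for x D n
  proof -
    have "(\<lambda>h. Q x h) \<midarrow>0\<rightarrow> D" using that unfolding DERIV_def Q_def .
    then obtain d where d: "d > 0" "\<And>h. h \<noteq> 0 \<Longrightarrow> \<bar>h\<bar> < d \<Longrightarrow> \<bar>Q x h - D\<bar> < 1/(2*(real n+1))"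
    proof -
      have "1/(2*(real n+1)) > 0" by simp
      with \<open>(\<lambda>h. Q x h) \<midarrow>0\<rightarrow> D\<close> obtain d where "d > 0" "\<forall>h. h \<noteq> 0 \<and> dist h 0 < d \<longrightarrow> dist (Q x h) D < 1/(2*(real n+1))"
        unfolding LIM_def by blast
      then show ?thesis using that by (auto simp: dist_real_def)
    qed
    obtain k where k: "inverse (real (Suc k)) < d" using reals_Archimedean d by blast
    have "x \<in> C n k"
      unfolding C_def
    proof (intro CollectI allI impI)
      fix h h' :: real assume h: "h \<noteq> 0" "h' \<noteq> 0" "\<bar>h\<bar> < 1/(real k+1)" "\<bar>h'\<bar> < 1/(real k+1)"
      have "1/(real k+1) = inverse (real (Suc k))" by (simp add: field_simps)
      with h k have "\<bar>h\<bar> < d" "\<bar>h'\<bar> < d" by auto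
      with d h have "\<bar>Q x h - D\<bar> < 1/(2*(real n+1))" "\<bar>Q x h' - D\<bar> < 1/(2*(real n+1))" by auto
      then have "\<bar>Q x h - Q x h'\<bar> < 2 * (1/(2*(real n+1)))" by linarith
      moreover have "2 * (1/(2*(real n+1))) = 1/(real n+1)" by (simp add: field_simps)
      ultimately show "\<bar>Q x h - Q x h'\<bar> \<le> 1/(real n+1)" by (metis order_less_imp_le)
    qed
    then show ?thesis ..
  qed
  have bwd: "\<exists>D. DERIV f x :> D" if H: "\<forall>n. \<exists>k. x \<in> C n k" for x
  proof -
    have "Cauchy (\<lambda>j. s j x)"
    proof (rule metric_CauchyI)
      fix e :: real assume "e > 0"
      obtain n where n: "inverse (real (Suc n)) < e" using reals_Archimedean \<open>e>0\<close> by blast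
      obtain k where k: "x \<in> C n k" using H by blast
      have "dist (s j x) (s j' x) < e" if "j \<ge> k" "j' \<ge> k" for j j'
      proof -
        have "1/(real j+2) < 1/(real k+1)" "1/(real j'+2) < 1/(real k+1)"
          using that by (auto simp: field_simps)
        then have "\<bar>s j x - s j' x\<bar> \<le> 1/(real n+1)"
          using k unfolding C_def s_def by auto
        also have "\<dots> < e" using n by (simp add: field_simps)
        finally show ?thesis by (simp add: dist_real_def)
      qed
      then show "\<exists>M. \<forall>m\<ge>M. \<forall>n\<ge>M. dist (s m x) (s n x) < e" by blast
    qed
    then obtain l where l: "(\<lambda>j. s j x) \<longlonglongrightarrow> l"
      using Cauchy_convergent_iff convergent_def by blast
    have "(\<lambda>h. Q x h) \<midarrow>0\<rightarrow> l"
      unfolding LIM_def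
    proof (intro allI impI)
      fix e :: real assume "e > 0"
      obtain n where n: "inverse (real (Suc n)) < e" using reals_Archimedean \<open>e>0\<close> by blast
      obtain k where k: "x \<in> C n k" using H by blast
      have "dist (Q x h) l < e" if h: "h \<noteq> 0" "dist h 0 < 1/(real k+1)" for h
      proof -
        have "(\<lambda>j. \<bar>Q x h - s j x\<bar>) \<longlonglongrightarrow> \<bar>Q x h - l\<bar>"
          by (intro tendsto_intros l)
        moreover have "\<forall>j\<ge>k. \<bar>Q x h - s j x\<bar> \<le> 1/(real n+1)"
        proof (intro allI impI)
          fix j assume "j \<ge> k"
          then have "1/(real j+2) < 1/(real k+1)" by (auto simp: field_simps)
          then show "\<bar>Q x h - s j x\<bar> \<le> 1/(real n+1)"
            using k h unfolding C_def s_def by (auto simp: dist_real_def)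
        qed
        ultimately have "\<bar>Q x h - l\<bar> \<le> 1/(real n+1)"
          by (intro LIMSEQ_le_const2) auto
        also have "\<dots> < e" using n by (simp add: field_simps)
        finally show ?thesis by (simp add: dist_real_def)
      qed
      then show "\<exists>d>0. \<forall>h. h \<noteq> 0 \<and> dist h 0 < d \<longrightarrow> dist (Q x h) l < e"
        by (intro exI[of _ "1/(real k+1)"]) auto
    qed
    then show ?thesis unfolding DERIV_def Q_def by blast
  qed
  have Ds_eq: "Ds = (\<Inter>n. \<Union>k. C n k)"
  proof (intro set_eqI iffI)
    fix x assume "x \<in> Ds"
    then obtain D where "DERIV f x :> D" unfolding Ds_def by blast
    from fwd[OF this] show "x \<in> (\<Inter>n. \<Union>k. C n k)" by blast
  next
    fix x assume "x \<in> (\<Inter>n. \<Union>k. C n k)"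
    then have "\<forall>n. \<exists>k. x \<in> C n k" by blast
    from bwd[OF this] show "x \<in> Ds" unfolding Ds_def by blast
  qed
  have Ds_borel: "Ds \<in> sets borel"
  proof -
    have "(\<Union>k. C n k) \<in> sets borel" for n
      using closedC by (intro sets.countable_UN) (auto intro: borel_closed)
    then show ?thesis unfolding Ds_eq by (intro sets.countable_INT) auto
  qed
  define c where "c = (SOME D::real. False)"
  define v where "v j x = (if x \<in> Ds then s j x else c)" for j x
  have contS: "continuous_on UNIV (s j)" for j
    unfolding s_def Q_def
    by (intro continuous_intros continuous_on_compose2[OF cf]) auto
  have vm: "v j \<in> borel_measurable borel" for j
    unfolding v_def
    by (intro measurable_If_set borel_measurable_continuous_onI contS) (auto simp: Ds_borel)
  have "(\<lambda>j. v j x) \<longlonglongrightarrow> deriv f x" for x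
  proof (cases "x \<in> Ds")
    case True
    then obtain D where D: "DERIV f x :> D" unfolding Ds_def by blast
    then have "deriv f x = D" by (rule DERIV_imp_deriv)
    with sD[OF D] True show ?thesis unfolding v_def by simp
  next
    case False
    then have "deriv f x = c" unfolding c_def Ds_def by (intro deriv_nondiff) auto
    with False show ?thesis unfolding v_def by simp
  qed
  then show ?thesis by (intro borel_measurable_LIMSEQ_real[OF _ vm]) auto
qed

lemma vitali_K:
  fixes h :: "real \<Rightarrow> real" and t :: real
  assumes hm: "h \<in> borel_measurable borel" and hnn: "\<And>x. 0 \<le> h x"
    and fin: "(\<integral>\<^sup>+x. ennreal (h x) \<partial>lborel) < \<infinity>" and t: "t > 0"
  shows "negligible {x. h x = 0 \<and> (\<forall>d>0. \<exists>r. 0<r \<and> r<d \<and>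
            ennreal (t * (2*r)) < (\<integral>\<^sup>+y. ennreal (h y) * indicator (ball x r) y \<partial>lborel))}"
    (is "negligible ?S")
proof -
  define \<nu> where "\<nu> = density lborel (\<lambda>x. ennreal (h x))"
  have hm': "(\<lambda>x. ennreal (h x)) \<in> borel_measurable borel" using hm by measurable
  have sets_nu: "sets \<nu> = sets borel" unfolding \<nu>_def by simp
  have nu_eq: "emeasure \<nu> A = (\<integral>\<^sup>+y. ennreal (h y) * indicator A y \<partial>lborel)" if "A \<in> sets borel" for A
    unfolding \<nu>_def using that using hm' by (subst emeasure_density) auto
  define Z where "Z = {x. h x = 0}"
  have Zb: "Z \<in> sets borel" unfolding Z_def using hm by measurable
  have nuZ: "emeasure \<nu> Z = 0"
  proof -
    have "(\<integral>\<^sup>+y. ennreal (h y) * indicator Z y \<partial>lborel) = (\<integral>\<^sup>+(y::real). 0 \<partial>lborel)"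
      by (rule nn_integral_cong) (auto simp add: Z_def indicator_def)
    then show ?thesis using nu_eq[OF Zb] by simp
  qed
  have nufin: "emeasure \<nu> (space \<nu>) \<noteq> \<infinity>"
  proof -
    have "space \<nu> = UNIV" unfolding \<nu>_def by simp
    then have "emeasure \<nu> (space \<nu>) = (\<integral>\<^sup>+y. ennreal (h y) \<partial>lborel)"
      using nu_eq[of UNIV] by simp
    then show ?thesis using fin by simp
  qed
  show ?thesis
    unfolding negligible_outer_le
  proof (intro allI impI)
    fix e :: real assume e: "e > 0"
    have "emeasure \<nu> Z = (INF U \<in> {U. Z \<subseteq> U \<and> open U}. emeasure \<nu> U)"
      by (rule outer_regular[OF sets_nu nufin Zb])
    then have "(INF U \<in> {U. Z \<subseteq> U \<and> open U}. emeasure \<nu> U) < ennreal (t*e)"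
      using nuZ e t by simp
    then obtain U where U: "Z \<subseteq> U" "open U" "emeasure \<nu> U < ennreal (t*e)"
      unfolding INF_less_iff by blast
    define K where "K = {(x,r). x \<in> ?S \<and> 0 < r \<and> ball x r \<subseteq> U \<and>
        ennreal (t * (2*r)) < emeasure \<nu> (ball x r)}"
    have cover: "\<exists>i. i \<in> K \<and> x \<in> ball (fst i) (snd i) \<and> snd i < d" if x: "x \<in> ?S" "d > 0" for x d
    proof -
      have "x \<in> U" using x U(1) unfolding Z_def by auto
      then obtain \<rho> where \<rho>: "\<rho> > 0" "ball x \<rho> \<subseteq> U" using U(2) open_contains_ball by blast
      from x obtain r where r: "0 < r" "r < min d \<rho>"
         "ennreal (t * (2*r)) < (\<integral>\<^sup>+y. ennreal (h y) * indicator (ball x r) y \<partial>lborel)"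
      proof -
        have "min d \<rho> > 0" using \<rho> x by simp
        with x(1) show ?thesis using that by blast
      qed
      have "ball x r \<subseteq> U" using \<rho> r by auto
      moreover have "ennreal (t * (2*r)) < emeasure \<nu> (ball x r)"
        using r(3) nu_eq[of "ball x r"] by simp
      ultimately have "(x,r) \<in> K" unfolding K_def using x r by auto
      then show ?thesis using r by (intro exI[of _ "(x,r)"]) auto
    qed
    obtain C where C: "countable C" "C \<subseteq> K"
      "pairwise (\<lambda>i j. disjnt (ball (fst i) (snd i)) (ball (fst j) (snd j))) C"
      "negligible (?S - (\<Union>i\<in>C. ball (fst i) (snd i)))"
      using Vitali_covering_theorem_balls[of ?S K fst snd, OF cover] by blast
    define V where "V = (\<Union>i\<in>C. ball (fst i) (snd i))"
    have disj: "disjoint_family_on (\<lambda>i. ball (fst i) (snd i)) C"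
      using C(3) unfolding disjoint_family_on_def pairwise_def disjnt_def by blast
    have VU: "V \<subseteq> U"
    proof -
      have "ball (fst i) (snd i) \<subseteq> U" if "i \<in> C" for i
        using C(2) that unfolding K_def by (cases i) auto
      then show ?thesis unfolding V_def by blast
    qed
    have lV: "emeasure lborel V = (\<integral>\<^sup>+i. emeasure lborel (ball (fst i) (snd i)) \<partial>count_space C)"
      unfolding V_def by (rule emeasure_UN_countable) (auto simp: C disj)
    have nV: "emeasure \<nu> V = (\<integral>\<^sup>+i. emeasure \<nu> (ball (fst i) (snd i)) \<partial>count_space C)"
      unfolding V_def by (rule emeasure_UN_countable) (auto simp: C disj sets_nu)
    have "ennreal t * emeasure lborel V = (\<integral>\<^sup>+i. ennreal t * emeasure lborel (ball (fst i) (snd i)) \<partial>count_space C)"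
      unfolding lV by (simp add: nn_integral_cmult)
    also have "\<dots> \<le> (\<integral>\<^sup>+i. emeasure \<nu> (ball (fst i) (snd i)) \<partial>count_space C)"
    proof (intro nn_integral_mono)
      fix i assume "i \<in> space (count_space C)"
      then have i: "i \<in> K" using C(2) by auto
      then have pos: "snd i > 0" unfolding K_def by auto
      have "ennreal t * emeasure lborel (ball (fst i) (snd i)) = ennreal (t * (2 * snd i))"
        using pos t by (simp add: ball_eq_greaterThanLessThan ennreal_mult[symmetric])
      also have "\<dots> < emeasure \<nu> (ball (fst i) (snd i))" using i unfolding K_def by auto
      finally show "ennreal t * emeasure lborel (ball (fst i) (snd i)) \<le> emeasure \<nu> (ball (fst i) (snd i))"
        by simp
    qed
    also have "\<dots> = emeasure \<nu> V" using nV by simp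
    also have "\<dots> \<le> emeasure \<nu> U"
      using VU U(2) by (intro emeasure_mono) (auto simp: sets_nu)
    also have "\<dots> < ennreal t * ennreal e" using U(3) t e by (simp add: ennreal_mult)
    finally have lt: "ennreal t * emeasure lborel V < ennreal t * ennreal e" .
    have lVe: "emeasure lborel V < ennreal e"
    proof (rule ccontr)
      assume "\<not> ?thesis"
      then have "ennreal t * ennreal e \<le> ennreal t * emeasure lborel V"
        by (intro mult_left_mono) auto
      with lt show False by simp
    qed
    have Vopen: "open V" unfolding V_def by auto
    have Vb: "V \<in> sets borel" using Vopen by (simp add: borel_open)
    have Vl: "V \<in> lmeasurable"
    proof -
      have "emeasure lborel V < top" using lVe ennreal_less_top order.strict_trans by blast
      then show ?thesis using Vb by (intro fmeasurableI) (auto simp: emeasure_completion)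
    qed
    have measV: "measure lebesgue V \<le> e"
    proof -
      have "measure lebesgue V = measure lborel V" using Vb by simp
      also have "\<dots> = enn2real (emeasure lborel V)" by (simp add: measure_def)
      also have "\<dots> \<le> e" using lVe e
        by (metis enn2real_ennreal enn2real_mono ennreal_less_top less_imp_le order_less_imp_le)
      finally show ?thesis .
    qed
    have N: "negligible (?S - V)" using C(4) unfolding V_def .
    then have Nn: "?S - V \<in> null_sets lebesgue" by (simp add: negligible_iff_null_sets)
    show "\<exists>T. ?S \<subseteq> T \<and> T \<in> lmeasurable \<and> measure lebesgue T \<le> e"
    proof (intro exI conjI)
      show "?S \<subseteq> V \<union> (?S - V)" by auto
      show "V \<union> (?S - V) \<in> lmeasurable" using Vl Nn by (intro fmeasurable.Un) (auto intro: fmeasurableI_null_sets)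
      have "measure lebesgue (V \<union> (?S - V)) \<le> measure lebesgue V + measure lebesgue (?S - V)"
        using Vl Nn by (intro measure_Un_le) auto
      also have "measure lebesgue (?S - V) = 0" using Nn by (simp add: measure_eq_0_null_sets)
      finally show "measure lebesgue (V \<union> (?S - V)) \<le> e" using measV by simp
    qed
  qed
qed

lemma ball_borel_real[measurable]: "ball (x::real) r \<in> sets borel"
  by (simp add: borel_open)

lemma lebesgue_points:
  fixes f :: "real \<Rightarrow> real"
  assumes fm: "f \<in> borel_measurable borel" and fin: "(\<integral>\<^sup>+x. ennreal \<bar>f x\<bar> \<partial>lborel) < \<infinity>"
  shows "\<exists>N. negligible N \<and> (\<forall>x. x \<notin> N \<longrightarrow> (\<forall>e>0. \<exists>d>0. \<forall>r. 0<r \<longrightarrow> r<d \<longrightarrow>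
           (\<integral>\<^sup>+y. ennreal \<bar>f y - f x\<bar> * indicator (ball x r) y \<partial>lborel) \<le> ennreal (e*(2*r))))"
proof -
  define H where "H = (\<lambda>(n::nat,k::int,R::nat) y. max 0 (\<bar>f y - real_of_int k/(real n+1)\<bar> - 1/(real n+1)) * indicator (ball 0 (real R)) y)"
  define S where "S = (\<lambda>(p::nat\<times>int\<times>nat, j::nat). {x. H p x = 0 \<and> (\<forall>d>0. \<exists>r. 0<r \<and> r<d \<and>
            ennreal (1/(real j+1) * (2*r)) < (\<integral>\<^sup>+y. ennreal (H p y) * indicator (ball x r) y \<partial>lborel))})"
  have Hm: "H p \<in> borel_measurable borel" for p
  proof -
    obtain n k R where p: "p = (n,k,R)" by (cases p)
    show ?thesis unfolding H_def p using fm
      by simp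
  qed
  have Hnn: "0 \<le> H p y" for p y unfolding H_def by (cases p) auto
  have Hfin: "(\<integral>\<^sup>+y. ennreal (H p y) \<partial>lborel) < \<infinity>" for p
  proof -
    obtain n k R where p: "p = (n,k,R)" by (cases p)
    define q where "q = real_of_int k/(real n+1)"
    have "(\<integral>\<^sup>+y. ennreal (H p y) \<partial>lborel) \<le> (\<integral>\<^sup>+y. ennreal \<bar>f y\<bar> + ennreal \<bar>q\<bar> * indicator (ball 0 (real R)) y \<partial>lborel)"
    proof (intro nn_integral_mono)
      fix y
      have m: "max 0 (\<bar>f y - q\<bar> - 1/(real n+1)) \<le> \<bar>f y\<bar> + \<bar>q\<bar>"
      proof -
        have "1/(real n+1) \<ge> 0" by simp
        then show ?thesis using abs_triangle_ineq4[of "f y" q] by linarith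
      qed
      have "H p y = max 0 (\<bar>f y - q\<bar> - 1/(real n+1)) * indicator (ball 0 (real R)) y"
        unfolding H_def p q_def by simp
      then have "H p y \<le> \<bar>f y\<bar> + \<bar>q\<bar> * indicator (ball 0 (real R)) y"
        using m by (auto simp: indicator_def)
      then have "ennreal (H p y) \<le> ennreal (\<bar>f y\<bar> + \<bar>q\<bar> * indicator (ball 0 (real R)) y)"
        by (rule ennreal_leI)
      also have "\<dots> = ennreal \<bar>f y\<bar> + ennreal \<bar>q\<bar> * indicator (ball 0 (real R)) y"
        by (auto simp: indicator_def ennreal_plus)
      finally show "ennreal (H p y) \<le> ennreal \<bar>f y\<bar> + ennreal \<bar>q\<bar> * indicator (ball 0 (real R)) y" .
    qed
    also have "\<dots> = (\<integral>\<^sup>+y. ennreal \<bar>f y\<bar> \<partial>lborel) + ennreal \<bar>q\<bar> * emeasure lborel (ball (0::real) (real R))"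
      using fm by (subst nn_integral_add) (auto simp: nn_integral_cmult_indicator intro!: borel_measurable_times)
    also have "\<dots> < \<infinity>" using fin emeasure_lborel_ball_finite[of "0::real" "real R"]
      by (simp add: ennreal_mult_less_top)
    finally show ?thesis .
  qed
  have negS: "negligible (S pj)" for pj
  proof -
    obtain p j where pj: "pj = (p,j)" by (cases pj)
    have "1/(real j+1) > 0" by simp
    from vitali_K[OF Hm Hnn Hfin this] show ?thesis unfolding pj S_def prod.case .
  qed
  define N where "N = (\<Union>pj. S pj)"
  have negN: "negligible N" unfolding N_def
    by (rule negligible_countable_Union) (auto intro: negS)
  have main: "\<exists>d>0. \<forall>r. 0<r \<longrightarrow> r<d \<longrightarrow>
           (\<integral>\<^sup>+y. ennreal \<bar>f y - f x\<bar> * indicator (ball x r) y \<partial>lborel) \<le> ennreal (e*(2*r))"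
    if x: "x \<notin> N" and e: "e > 0" for x e
  proof -
    obtain n where n: "inverse (real (Suc n)) < e/3" using reals_Archimedean[of "e/3"] e by auto
    define s where "s = 1/(real n+1)"
    have s_pos: "s > 0" unfolding s_def by simp
    have s3: "3 * s \<le> e" using n unfolding s_def by (simp add: field_simps)
    define k where "k = \<lfloor>f x * (real n+1)\<rfloor>"
    define q where "q = real_of_int k/(real n+1)"
    have q1: "q \<le> f x" unfolding q_def k_def by (simp add: field_simps)
    have q2: "f x < q + s" unfolding q_def k_def s_def
    proof -
      have "f x * (real n+1) < real_of_int \<lfloor>f x * (real n+1)\<rfloor> + 1" by linarith
      then show "f x < real_of_int \<lfloor>f x * (real n + 1)\<rfloor> / (real n + 1) + 1 / (real n + 1)"
        by (simp add: field_simps)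
    qed
    define R where "R = nat \<lceil>\<bar>x\<bar>\<rceil> + 2"
    have R: "\<bar>x\<bar> + 1 < real R" unfolding R_def by linarith
    define p where "p = (n,k,R)"
    have Hx: "H p x = 0" unfolding H_def p_def using q1 q2
      by (simp add: q_def[symmetric] s_def[symmetric])
    have "x \<notin> S (p,n)" using x unfolding N_def by blast
    then obtain d where d: "d > 0" "\<And>r. 0<r \<Longrightarrow> r<d \<Longrightarrow>
        \<not> ennreal (1/(real n+1) * (2*r)) < (\<integral>\<^sup>+y. ennreal (H p y) * indicator (ball x r) y \<partial>lborel)"
      unfolding S_def using Hx by auto
    show ?thesis
    proof (intro exI[of _ "min d 1"] conjI allI impI)
      show "min d 1 > 0" using d by simp
      fix r assume r: "0 < r" "r < min d 1"
      have bH: "(\<integral>\<^sup>+y. ennreal (H p y) * indicator (ball x r) y \<partial>lborel) \<le> ennreal (s * (2*r))"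
        using d(2)[of r] r unfolding s_def by (simp add: not_less)
      have "(\<integral>\<^sup>+y. ennreal \<bar>f y - f x\<bar> * indicator (ball x r) y \<partial>lborel)
          \<le> (\<integral>\<^sup>+y. ennreal (H p y) * indicator (ball x r) y + ennreal (2 * s) * indicator (ball x r) y \<partial>lborel)"
      proof (intro nn_integral_mono)
        fix y
        show "ennreal \<bar>f y - f x\<bar> * indicator (ball x r) y
             \<le> ennreal (H p y) * indicator (ball x r) y + ennreal (2 * s) * indicator (ball x r) y"
        proof (cases "y \<in> ball x r")
          case True
          then have "y \<in> ball 0 (real R)" using r R by (auto simp: dist_real_def)
          then have Hy: "H p y = max 0 (\<bar>f y - q\<bar> - s)"
            unfolding H_def p_def q_def s_def by simp
          have "\<bar>f y - f x\<bar> \<le> \<bar>f y - q\<bar> + \<bar>f x - q\<bar>" by linarith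
          moreover have "\<bar>f x - q\<bar> \<le> s" using q1 q2 by linarith
          moreover have "\<bar>f y - q\<bar> \<le> max 0 (\<bar>f y - q\<bar> - s) + s" by linarith
          ultimately have "\<bar>f y - f x\<bar> \<le> H p y + 2 * s" unfolding Hy by linarith
          then have "ennreal \<bar>f y - f x\<bar> \<le> ennreal (H p y) + ennreal (2 * s)"
          proof -
            have "ennreal \<bar>f y - f x\<bar> \<le> ennreal (H p y + 2 * s)" by (rule ennreal_leI) fact
            also have "\<dots> = ennreal (H p y) + ennreal (2 * s)"
              using Hnn[of p y] s_pos by (intro ennreal_plus) auto
            finally show ?thesis .
          qed
          then show ?thesis using True by simp
        qed simp
      qed
      also have "\<dots> = (\<integral>\<^sup>+y. ennreal (H p y) * indicator (ball x r) y \<partial>lborel) + ennreal (2 * s) * emeasure lborel (ball x r)"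
        using Hm by (subst nn_integral_add) (auto simp: nn_integral_cmult_indicator)
      also have "\<dots> \<le> ennreal (s * (2*r)) + ennreal (2 * s) * ennreal (2*r)"
        using bH r by (intro add_mono) (auto simp: ball_eq_greaterThanLessThan)
      also have "\<dots> = ennreal (3 * s*(2*r))"
        using s_pos r by (simp add: ennreal_mult[symmetric] ennreal_plus[symmetric] algebra_simps)
      also have "\<dots> \<le> ennreal (e*(2*r))"
        using s3 r by (intro ennreal_leI mult_right_mono) auto
      finally show "(\<integral>\<^sup>+y. ennreal \<bar>f y - f x\<bar> * indicator (ball x r) y \<partial>lborel) \<le> ennreal (e*(2*r))" .
    qed
  qed
  show ?thesis using negN main by blast
qed

lemma incr:
  fixes g u :: "real \<Rightarrow> real"
  assumes gi: "set_integrable lborel {-L..L} g"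
    and u: "\<forall>x\<in>{-L..L}. u x = u (-L) + (LBINT t=-L..x. g t)"
    and ab: "-L \<le> a" "a \<le> b" "b \<le> L"
  shows "u b - u a = (LINT t:{a..b}|lborel. g t)"
proof -
  have int: "interval_lebesgue_integrable lborel (ereal (-L)) (ereal b) g"
  proof -
    have "set_integrable lborel {-L<..<b} g"
      by (rule set_integrable_subset[OF gi]) (use ab in auto)
    then show ?thesis unfolding interval_lebesgue_integrable_def using ab by simp
  qed
  have mm: "min (ereal (-L)) (min (ereal a) (ereal b)) = ereal (-L)"
           "max (ereal (-L)) (max (ereal a) (ereal b)) = ereal b" using ab by auto
  have "(LBINT t=-L..a. g t) + (LBINT t=a..b. g t) = (LBINT t=-L..b. g t)"
    by (rule interval_integral_sum) (simp only: mm int)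
  moreover have "u b = u (-L) + (LBINT t=-L..b. g t)" "u a = u (-L) + (LBINT t=-L..a. g t)"
    using ab by (intro bspec[OF u]; simp)+
  moreover have "(LBINT t=a..b. g t) = (LINT t:{a..b}|lborel. g t)"
    using ab by (simp add: interval_integral_Icc)
  ultimately show ?thesis by simp
qed

lemma incr_bound:
  fixes g u :: "real \<Rightarrow> real"
  assumes gi: "set_integrable lborel {-L..L} g"
    and u: "\<forall>x\<in>{-L..L}. u x = u (-L) + (LBINT t=-L..x. g t)"
    and ab: "-L \<le> a" "a \<le> b" "b \<le> L"
  shows "ennreal \<bar>u b - u a - (b-a)*c\<bar> \<le> (\<integral>\<^sup>+t. ennreal \<bar>g t - c\<bar> * indicator {a..b} t \<partial>lborel)"
proof -
  have gab: "set_integrable lborel {a..b} g"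
    by (rule set_integrable_subset[OF gi]) (use ab in auto)
  have cab: "set_integrable lborel {a..b} (\<lambda>t. c)"
    by (rule borel_integrable_atLeastAtMost') simp
  have dab: "set_integrable lborel {a..b} (\<lambda>t. g t - c)"
    using gab cab by simp
  have "u b - u a - (b-a)*c = (LINT t:{a..b}|lborel. g t - c)"
    using incr[OF gi u ab] gab cab ab by (simp add: set_integral_const)
  then have "\<bar>u b - u a - (b-a)*c\<bar> \<le> (LINT t:{a..b}|lborel. \<bar>g t - c\<bar>)"
    using set_integral_norm_bound[OF dab] by simp
  then have "ennreal \<bar>u b - u a - (b-a)*c\<bar> \<le> ennreal (LINT t:{a..b}|lborel. \<bar>g t - c\<bar>)"
    by (rule ennreal_leI)
  also have "(LINT t:{a..b}|lborel. \<bar>g t - c\<bar>) = (\<integral>t. indicator {a..b} t * \<bar>g t - c\<bar> \<partial>lborel)"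
    by (simp add: set_lebesgue_integral_def)
  also have "ennreal \<dots> = (\<integral>\<^sup>+t. ennreal (indicator {a..b} t * \<bar>g t - c\<bar>) \<partial>lborel)"
  proof (rule nn_integral_eq_integral[symmetric])
    have "set_integrable lborel {a..b} (\<lambda>t. \<bar>g t - c\<bar>)"
      using dab by (simp add: set_integrable_abs)
    then show "integrable lborel (\<lambda>t. indicator {a..b} t * \<bar>g t - c\<bar>)"
      by (simp add: set_integrable_def)
  qed auto
  also have "\<dots> = (\<integral>\<^sup>+t. ennreal \<bar>g t - c\<bar> * indicator {a..b} t \<partial>lborel)"
    by (intro nn_integral_cong) (simp split: split_indicator)
  finally show ?thesis .
qed

lemma indef_deriv_ae:
  fixes g u :: "real \<Rightarrow> real"
  assumes gm: "g \<in> borel_measurable lborel" and gi: "set_integrable lborel {-L..L} g"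
    and u: "\<forall>x\<in>{-L..L}. u x = u (-L) + (LBINT t=-L..x. g t)"
  shows "\<exists>N. negligible N \<and> (\<forall>x\<in>{-L<..<L} - N. DERIV u x :> g x)"
proof -
  define f where "f y = indicator {-L..L} y * g y" for y
  have fm: "f \<in> borel_measurable borel" unfolding f_def using gm by simp
  have "integrable lborel f" using gi unfolding set_integrable_def f_def by simp
  then have fin: "(\<integral>\<^sup>+x. ennreal \<bar>f x\<bar> \<partial>lborel) < \<infinity>"
    unfolding integrable_iff_bounded by simp
  obtain N where N: "negligible N" and NP: "\<And>x e. x \<notin> N \<Longrightarrow> e > 0 \<Longrightarrow> \<exists>d>0. \<forall>r. 0<r \<longrightarrow> r<d \<longrightarrow>
           (\<integral>\<^sup>+y. ennreal \<bar>f y - f x\<bar> * indicator (ball x r) y \<partial>lborel) \<le> ennreal (e*(2*r))"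
    using lebesgue_points[OF fm fin] by blast
  have "DERIV u x :> g x" if x: "x \<in> {-L<..<L}" "x \<notin> N" for x
  proof -
    have fx: "f x = g x" using x unfolding f_def by simp
    have "((\<lambda>y. (u y - u x) / (y - x)) \<longlongrightarrow> g x) (at x)"
      unfolding LIM_eq
    proof (intro allI impI)
      fix e :: real assume e: "e > 0"
      obtain d where d: "d > 0" and dP: "\<And>r. 0<r \<Longrightarrow> r<d \<Longrightarrow>
           (\<integral>\<^sup>+y. ennreal \<bar>f y - f x\<bar> * indicator (ball x r) y \<partial>lborel) \<le> ennreal (e/8*(2*r))"
        using NP[OF x(2), of "e/8"] e by auto
      define s where "s = min (d/2) (min (x + L) (L - x))"
      have s: "s > 0" unfolding s_def using d x by auto
      have "norm ((u y - u x) / (y - x) - g x) < e" if y: "y \<noteq> x" "norm (y - x) < s" for y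
      proof -
        define r where "r = 2 * \<bar>y - x\<bar>"
        have r: "0 < r" "r < d" using y s_def unfolding r_def by auto
        have yL: "-L \<le> y" "y \<le> L" using y unfolding s_def by auto
        have key: "(\<integral>\<^sup>+t. ennreal \<bar>g t - g x\<bar> * indicator {min x y..max x y} t \<partial>lborel)
                   \<le> (\<integral>\<^sup>+t. ennreal \<bar>f t - f x\<bar> * indicator (ball x r) t \<partial>lborel)"
        proof (intro nn_integral_mono)
          fix t
          show "ennreal \<bar>g t - g x\<bar> * indicator {min x y..max x y} t
                \<le> ennreal \<bar>f t - f x\<bar> * indicator (ball x r) t"
          proof (cases "t \<in> {min x y..max x y}")
            case True
            then have "t \<in> {-L..L}" using x yL by auto
            then have "f t = g t" unfolding f_def by simp
            moreover have "t \<in> ball x r"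
            proof -
              have "\<bar>x - t\<bar> \<le> \<bar>y - x\<bar>" using True by (auto simp: min_def max_def split: if_splits)
              moreover have "\<bar>y - x\<bar> > 0" using y by simp
              moreover have "\<And>a b::real. a \<le> b \<Longrightarrow> 0 < b \<Longrightarrow> a < 2*b" by linarith
              ultimately have "\<bar>x - t\<bar> < 2 * \<bar>y - x\<bar>" by blast
              then show ?thesis unfolding r_def by (simp add: dist_real_def)
            qed
            ultimately show ?thesis using True fx by simp
          qed simp
        qed
        have "ennreal \<bar>u y - u x - (y - x) * g x\<bar>
              \<le> (\<integral>\<^sup>+t. ennreal \<bar>g t - g x\<bar> * indicator {min x y..max x y} t \<partial>lborel)"
        proof (cases "x \<le> y")
          case True
          then show ?thesis using incr_bound[OF gi u, of x y "g x"] x yL by simp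
        next
          case False
          have "\<bar>u y - u x - (y - x) * g x\<bar> = \<bar>u x - u y - (x - y) * g x\<bar>" by argo
          then show ?thesis using incr_bound[OF gi u, of y x "g x"] x yL False by simp
        qed
        also note key
        also have "(\<integral>\<^sup>+t. ennreal \<bar>f t - f x\<bar> * indicator (ball x r) t \<partial>lborel) \<le> ennreal (e/8*(2*r))"
          using dP[OF r] .
        finally have "\<bar>u y - u x - (y - x) * g x\<bar> \<le> e/8*(2*r)"
          using e r by (subst (asm) ennreal_le_iff) auto
        then have "\<bar>u y - u x - (y - x) * g x\<bar> \<le> e/2 * \<bar>y - x\<bar>" unfolding r_def by simp
        moreover have "(u y - u x) / (y - x) - g x = (u y - u x - (y - x) * g x) / (y - x)"
          using y by (simp add: field_simps)
        ultimately have "\<bar>(u y - u x) / (y - x) - g x\<bar> \<le> e/2"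
          using y by (simp add: abs_divide divide_le_eq)
        then show ?thesis using e by simp
      qed
      then show "\<exists>s>0. \<forall>y. y \<noteq> x \<and> norm (y - x) < s \<longrightarrow> norm ((u y - u x) / (y - x) - g x) < e"
        using s by blast
    qed
    then show ?thesis by (simp add: has_field_derivative_iff)
  qed
  then show ?thesis using N by blast
qed

lemma H1_cont:
  fixes g w :: "real \<Rightarrow> real"
  assumes gi: "set_integrable lborel {-L..L} g"
    and w: "\<forall>x\<in>{-L..L}. w x = w (-L) + (LBINT t=-L..x. g t)"
  shows "continuous_on {-L..L} w"
proof -
  have gI: "g integrable_on {-L..L}" using set_borel_integral_eq_integral(1)[OF gi] .
  have eq: "w x = w (-L) + integral {-L..x} g" if x: "x \<in> {-L..L}" for x
  proof -
    have si: "set_integrable lborel {-L..x} g"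
      by (rule set_integrable_subset[OF gi]) (use x in auto)
    have "w x = w (-L) + (LBINT t=-L..x. g t)" using w x by blast
    also have "(LBINT t=-L..x. g t) = (LINT t:{-L..x}|lborel. g t)"
      using x by (simp add: interval_integral_Icc)
    also have "\<dots> = integral {-L..x} g" using set_borel_integral_eq_integral(2)[OF si] .
    finally show ?thesis .
  qed
  have "continuous_on {-L..L} (\<lambda>x. w (-L) + integral {-L..x} g)"
    by (intro continuous_intros indefinite_integral_continuous_1 gI)
  then show ?thesis using eq by (metis (no_types, lifting) continuous_on_eq)
qed

definition clampL :: "real \<Rightarrow> real \<Rightarrow> real" where
  "clampL L x = max (-L) (min L x)"

lemma clamp_cont:
  assumes "continuous_on {-L..L} w" "L \<ge> 0"
  shows "continuous_on UNIV (\<lambda>x. w (clampL L x))"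
proof -
  have "continuous_on UNIV (clampL L)" unfolding clampL_def by (intro continuous_intros)
  moreover have "clampL L ` UNIV \<subseteq> {-L..L}" using assms(2) unfolding clampL_def by auto
  ultimately show ?thesis using continuous_on_compose2[OF assms(1)] by blast
qed

lemma clamp_deriv:
  assumes "x \<in> {-L<..<L}"
  shows "deriv w x = deriv (\<lambda>x. w (clampL L x)) x"
proof (rule deriv_cong_ev)
  have "eventually (\<lambda>y. y \<in> {-L<..<L}) (nhds x)"
    using assms by (intro eventually_nhds_in_open) auto
  then show "eventually (\<lambda>y. w y = w (clampL L y)) (nhds x)"
    by eventually_elim (auto simp: clampL_def)
qed simp

lemma energy_repr:
  fixes a b G w g :: "real \<Rightarrow> real"
  assumes ca: "continuous_on UNIV a" and cb: "continuous_on UNIV b" and cG: "continuous_on UNIV G"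
    and L: "L > 0"
    and gm: "g \<in> borel_measurable lborel" and gi: "set_integrable lborel {-L..L} g"
    and g2: "set_integrable lborel {-L..L} (\<lambda>x. (g x)\<^sup>2)"
    and w: "\<forall>x\<in>{-L..L}. w x = w (-L) + (LBINT t=-L..x. g t)"
  shows "set_integrable lborel {-L..L} (\<lambda>x. (1/2) * (g x)\<^sup>2 * a x + G (w x) * b x)"
    and "energy a b G L w = (LINT x:{-L..L}|lborel. (1/2) * (g x)\<^sup>2 * a x + G (w x) * b x)"
proof -
  define wt where "wt x = w (clampL L x)" for x
  have cw: "continuous_on {-L..L} w" by (rule H1_cont[OF gi w])
  have cwt: "continuous_on UNIV wt" unfolding wt_def using clamp_cont[OF cw] L by simp
  have wtw: "wt x = w x" if "x \<in> {-L..L}" for x using that unfolding wt_def clampL_def by auto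
  have dwt: "deriv w x = deriv wt x" if "x \<in> {-L<..<L}" for x
    unfolding wt_def by (rule clamp_deriv[OF that])
  have dm: "deriv wt \<in> borel_measurable borel" by (rule deriv_borel[OF cwt])
  have am: "a \<in> borel_measurable borel" "b \<in> borel_measurable borel" "G \<in> borel_measurable borel"
    using ca cb cG by (auto intro: borel_measurable_continuous_onI)
  have wtm: "wt \<in> borel_measurable borel" using cwt by (rule borel_measurable_continuous_onI)
  have Gwtm: "(\<lambda>x. G (wt x)) \<in> borel_measurable borel"
    using cwt cG by (intro borel_measurable_continuous_onI continuous_on_compose2[OF cG cwt]) auto
  obtain N where N: "negligible N" and NP: "\<And>x. x \<in> {-L<..<L} - N \<Longrightarrow> DERIV w x :> g x"
    using indef_deriv_ae[OF gm gi w] by blast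
  have AEN: "AE x in lborel. x \<notin> N"
  proof -
    have "N \<in> null_sets lebesgue" using N by (simp add: negligible_iff_null_sets)
    then have "AE x in lebesgue. x \<notin> N" by (rule AE_not_in)
    then show ?thesis by (simp add: AE_completion_iff)
  qed
  define E1 where "E1 x = (1/2) * (deriv wt x)\<^sup>2 * a x + G (wt x) * b x" for x
  define E2 where "E2 x = (1/2) * (g x)\<^sup>2 * a x + G (wt x) * b x" for x
  have E1m: "E1 \<in> borel_measurable lborel" unfolding E1_def using dm am Gwtm by simp
  have E2m: "E2 \<in> borel_measurable lborel" unfolding E2_def using gm am Gwtm by simp
  have "energy a b G L w = (LINT x:{-L<..<L}|lborel. (1/2) * (deriv w x)\<^sup>2 * a x + G (w x) * b x)"
    unfolding energy_def interval_lebesgue_integral_def using L by simp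
  also have "\<dots> = (LINT x:{-L<..<L}|lborel. E1 x)"
    by (rule set_lebesgue_integral_cong) (auto simp: E1_def dwt wtw)
  also have "\<dots> = (LINT x:{-L<..<L}|lborel. E2 x)"
  proof (rule set_lebesgue_integral_cong_AE)
    show "AE x\<in>{-L<..<L} in lborel. E1 x = E2 x"
      using AEN
    proof eventually_elim
      case (elim x)
      show ?case
      proof
        assume x: "x \<in> {-L<..<L}"
        then have "deriv w x = g x" using NP elim by (auto intro: DERIV_imp_deriv)
        then show "E1 x = E2 x" unfolding E1_def E2_def using dwt[OF x] by simp
      qed
    qed
  qed (use E1m E2m in auto)
  also have "\<dots> = (LINT x:{-L..L}|lborel. E2 x)"
    by (rule set_integral_discrete_difference[where X="{-L, L}"]) auto
  also have "\<dots> = (LINT x:{-L..L}|lborel. (1/2) * (g x)\<^sup>2 * a x + G (w x) * b x)"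
    by (rule set_lebesgue_integral_cong) (auto simp: E2_def wtw)
  finally show "energy a b G L w = (LINT x:{-L..L}|lborel. (1/2) * (g x)\<^sup>2 * a x + G (w x) * b x)" .
  show "set_integrable lborel {-L..L} (\<lambda>x. (1/2) * (g x)\<^sup>2 * a x + G (w x) * b x)"
  proof (rule set_integral_add(1))
    have "bounded (a ` {-L..L})"
      by (intro compact_imp_bounded compact_continuous_image continuous_on_subset[OF ca]) auto
    then obtain A where A: "\<And>x. x \<in> {-L..L} \<Longrightarrow> \<bar>a x\<bar> \<le> A" unfolding bounded_real by blast
    have i1: "integrable lborel (\<lambda>x. indicator {-L..L} x *\<^sub>R (A * (g x)\<^sup>2))"
      using g2 unfolding set_integrable_def[symmetric] by (intro set_integrable_mult_right) auto
    have "integrable lborel (\<lambda>x. indicator {-L..L} x *\<^sub>R ((1/2) * (g x)\<^sup>2 * a x))"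
    proof (rule Bochner_Integration.integrable_bound[OF i1])
      show "(\<lambda>x. indicator {-L..L} x *\<^sub>R ((1/2) * (g x)\<^sup>2 * a x)) \<in> borel_measurable lborel"
        using gm am by simp
      show "AE x in lborel. norm (indicator {-L..L} x *\<^sub>R ((1/2) * (g x)\<^sup>2 * a x))
             \<le> norm (indicator {-L..L} x *\<^sub>R (A * (g x)\<^sup>2))"
      proof (rule AE_I2)
        fix x
        show "norm (indicator {-L..L} x *\<^sub>R ((1/2) * (g x)\<^sup>2 * a x))
             \<le> norm (indicator {-L..L} x *\<^sub>R (A * (g x)\<^sup>2))"
        proof (cases "x \<in> {-L..L}")
          case True
          have "\<bar>(1/2) * (g x)\<^sup>2 * a x\<bar> = (1/2) * (g x)\<^sup>2 * \<bar>a x\<bar>" by (simp add: abs_mult)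
          also have "\<dots> \<le> (1/2) * (g x)\<^sup>2 * A"
            using A[OF True] by (intro mult_left_mono) auto
          also have "\<dots> \<le> (g x)\<^sup>2 * A"
          proof -
            have "0 \<le> A" using A[OF True] by linarith
            then have "0 \<le> (g x)\<^sup>2 * A" by simp
            then show ?thesis by linarith
          qed
          also have "\<dots> \<le> \<bar>A * (g x)\<^sup>2\<bar>" by (simp add: mult.commute)
          finally show ?thesis using True by simp
        qed simp
      qed
    qed
    then show "set_integrable lborel {-L..L} (\<lambda>x. (1/2) * (g x)\<^sup>2 * a x)"
      unfolding set_integrable_def .
    have "continuous_on {-L..L} (\<lambda>x. G (w x) * b x)"
      by (intro continuous_intros continuous_on_compose2[OF cG cw] continuous_on_subset[OF cb]) auto
    then show "set_integrable lborel {-L..L} (\<lambda>x. G (w x) * b x)"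
      by (rule borel_integrable_atLeastAtMost')
  qed
qed

lemma set_int_subset_mono:
  fixes f :: "real \<Rightarrow> real"
  assumes fi: "set_integrable lborel A f" and B: "B \<in> sets borel" "B \<subseteq> A"
    and nn: "\<And>x. x \<in> A \<Longrightarrow> 0 \<le> f x"
  shows "(LINT x:B|lborel. f x) \<le> (LINT x:A|lborel. f x)"
proof -
  have fiB: "set_integrable lborel B f" by (rule set_integrable_subset[OF fi]) (use B in auto)
  show ?thesis
    unfolding set_lebesgue_integral_def
  proof (rule integral_mono)
    show "integrable lborel (\<lambda>x. indicator B x *\<^sub>R f x)" using fiB unfolding set_integrable_def .
    show "integrable lborel (\<lambda>x. indicator A x *\<^sub>R f x)" using fi unfolding set_integrable_def .
    fix x show "indicator B x *\<^sub>R f x \<le> indicator A x *\<^sub>R f x"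
      using B nn[of x] by (auto split: split_indicator)
  qed
qed

lemma pos_lower:
  fixes f :: "real \<Rightarrow> real"
  assumes "continuous_on S f" "compact S" "S \<noteq> {}" "\<And>x. x \<in> S \<Longrightarrow> f x > 0"
  shows "\<exists>\<alpha>>0. \<forall>x\<in>S. \<alpha> \<le> f x"
proof -
  obtain x0 where "x0 \<in> S" "\<forall>y\<in>S. f x0 \<le> f y" using continuous_attains_inf[OF assms(2,3,1)] by blast
  then show ?thesis using assms(4) by blast
qed

lemma cs_ineq:
  fixes g :: "real \<Rightarrow> real"
  assumes gi: "set_integrable lborel {0..x} g" and g2: "set_integrable lborel {0..x} (\<lambda>t. (g t)\<^sup>2)"
    and x: "x > 0"
  shows "(LINT t:{0..x}|lborel. g t)\<^sup>2 \<le> x * (LINT t:{0..x}|lborel. (g t)\<^sup>2)"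
proof -
  define I where "I = (LINT t:{0..x}|lborel. g t)"
  define I2 where "I2 = (LINT t:{0..x}|lborel. (g t)\<^sup>2)"
  define c where "c = I / x"
  have ci: "set_integrable lborel {0..x} (\<lambda>t. c\<^sup>2)"
    by (rule borel_integrable_atLeastAtMost') simp
  have i1: "set_integrable lborel {0..x} (\<lambda>t. 2*c * g t)" using gi by simp
  have "(\<lambda>t. (g t - c)\<^sup>2) = (\<lambda>t. ((g t)\<^sup>2 - 2*c * g t) + c\<^sup>2)"
    by (simp add: power2_eq_square algebra_simps)
  then have "(LINT t:{0..x}|lborel. (g t - c)\<^sup>2) = (LINT t:{0..x}|lborel. ((g t)\<^sup>2 - 2*c * g t) + c\<^sup>2)"
    by simp
  also have "\<dots> = (LINT t:{0..x}|lborel. (g t)\<^sup>2 - 2*c * g t) + (LINT t:{0..x}|lborel. c\<^sup>2)"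
    using g2 i1 ci by (intro set_integral_add(2)) auto
  also have "(LINT t:{0..x}|lborel. (g t)\<^sup>2 - 2*c * g t) = I2 - 2*c*I"
    using g2 i1 unfolding I2_def I_def by (subst set_integral_diff(2)) auto
  also have "(LINT t:{0..x}|lborel. c\<^sup>2) = x * c\<^sup>2"
    using x by (simp add: set_integral_const)
  finally have eq: "(LINT t:{0..x}|lborel. (g t - c)\<^sup>2) = I2 - 2*c*I + x*c\<^sup>2" .
  have "0 \<le> (LINT t:{0..x}|lborel. (g t - c)\<^sup>2)"
    unfolding set_lebesgue_integral_def by (rule integral_nonneg_AE) (auto split: split_indicator)
  then have "0 \<le> I2 - 2*c*I + x*c\<^sup>2" using eq by simp
  then have "0 \<le> x * (I2 - 2*c*I + x*c\<^sup>2)" using x by simp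
  moreover have "x * (I2 - 2*c*I + x*c\<^sup>2) = x * I2 - I\<^sup>2"
    unfolding c_def using x by (simp add: field_simps power2_eq_square)
  ultimately show ?thesis unfolding I_def[symmetric] I2_def[symmetric] by simp
qed

definition LBP :: "(real \<Rightarrow> real) \<Rightarrow> (real \<Rightarrow> real) \<Rightarrow> (real \<Rightarrow> real) \<Rightarrow> real \<Rightarrow> real \<Rightarrow> bool" where
  "LBP a b G m \<delta> \<longleftrightarrow> (\<forall>(L::real) (u::real\<Rightarrow>real) (g::real\<Rightarrow>real). L \<ge> 1 \<longrightarrow> set_integrable lborel {-L..L} g \<longrightarrow>
     set_integrable lborel {-L..L} (\<lambda>x. (g x)\<^sup>2) \<longrightarrow>
     (\<forall>x\<in>{-L..L}. u x = u (-L) + (LBINT t=-L..x. g t)) \<longrightarrow>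
     set_integrable lborel {-L..L} (\<lambda>x. (1/2) * (g x)\<^sup>2 * a x + G (u x) * b x) \<longrightarrow>
     u 0 = 0 \<longrightarrow>
     G m * (LINT x:{-L..L}|lborel. b x) + \<delta> \<le> (LINT x:{-L..L}|lborel. (1/2) * (g x)\<^sup>2 * a x + G (u x) * b x))"

lemma lower_bound:
  fixes a b G :: "real \<Rightarrow> real" and m :: real
  assumes ca: "continuous_on UNIV a" and cb: "continuous_on UNIV b" and cG: "continuous_on UNIV G"
    and apos: "\<And>x. a x > 0" and bpos: "\<And>x. b x > 0" and m: "m > 0"
    and Gm: "\<And>s. G s \<ge> G m" and Gs: "\<And>s. s \<in> {-m<..<m} \<Longrightarrow> G s > G m"
  shows "\<exists>\<delta>>0. LBP a b G m \<delta>"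
proof -
  obtain \<alpha> where \<alpha>: "\<alpha> > 0" "\<And>x. x \<in> {0..1} \<Longrightarrow> \<alpha> \<le> a x"
    using pos_lower[of "{0..1}" a] continuous_on_subset[OF ca] apos by force
  obtain \<beta> where \<beta>: "\<beta> > 0" "\<And>x. x \<in> {0..1} \<Longrightarrow> \<beta> \<le> b x"
    using pos_lower[of "{0..1}" b] continuous_on_subset[OF cb] bpos by force
  define c where "c = m/2"
  have c: "c > 0" "c < m" using m unfolding c_def by auto
  have "\<exists>\<gamma>>0. \<forall>s\<in>{-c..c}. \<gamma> \<le> G s - G m"
  proof (rule pos_lower)
    show "continuous_on {-c..c} (\<lambda>s. G s - G m)"
      by (intro continuous_intros continuous_on_subset[OF cG]) auto
    show "\<And>s. s \<in> {-c..c} \<Longrightarrow> G s - G m > 0" using Gs c by auto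
  qed (use c in auto)
  then obtain \<gamma> where \<gamma>: "\<gamma> > 0" "\<And>s. s \<in> {-c..c} \<Longrightarrow> \<gamma> \<le> G s - G m" by blast
  define \<delta> where "\<delta> = min (\<gamma>*\<beta>) (\<alpha>*c\<^sup>2/2)"
  have \<delta>: "\<delta> > 0" unfolding \<delta>_def using \<alpha> \<beta> \<gamma> c by auto
  have "LBP a b G m \<delta>"
    unfolding LBP_def
  proof (intro allI impI)
    fix L :: real and u g :: "real \<Rightarrow> real"
    assume L: "L \<ge> 1" and gi: "set_integrable lborel {-L..L} g"
      and g2: "set_integrable lborel {-L..L} (\<lambda>x. (g x)\<^sup>2)"
      and urep: "\<forall>x\<in>{-L..L}. u x = u (-L) + (LBINT t=-L..x. g t)"
      and Ei: "set_integrable lborel {-L..L} (\<lambda>x. (1/2) * (g x)\<^sup>2 * a x + G (u x) * b x)"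
      and u0: "u 0 = 0"
    define E where "E x = (1/2) * (g x)\<^sup>2 * a x + G (u x) * b x" for x
    define D where "D x = (1/2) * (g x)\<^sup>2 * a x + (G (u x) - G m) * b x" for x
    have bi: "set_integrable lborel {-L..L} b"
      by (rule borel_integrable_atLeastAtMost') (rule continuous_on_subset[OF cb], auto)
    have DE: "D x = E x - G m * b x" for x unfolding D_def E_def by (simp add: algebra_simps)
    have Di: "set_integrable lborel {-L..L} D"
      unfolding DE using Ei bi unfolding E_def by (intro set_integral_diff(1)) auto
    have intE: "(LINT x:{-L..L}|lborel. E x) = G m * (LINT x:{-L..L}|lborel. b x) + (LINT x:{-L..L}|lborel. D x)"
    proof -
      have "(LINT x:{-L..L}|lborel. D x) = (LINT x:{-L..L}|lborel. E x) - (LINT x:{-L..L}|lborel. G m * b x)"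
        unfolding DE using Ei bi unfolding E_def by (intro set_integral_diff(2)) auto
      then show ?thesis by simp
    qed
    have Dnn: "0 \<le> D x" for x
      unfolding D_def using apos[of x] bpos[of x] Gm[of "u x"] by (intro add_nonneg_nonneg) auto
    have sub: "{0..1} \<subseteq> {-L..L}" using L by auto
    have D01: "(LINT x:{0..1}|lborel. D x) \<le> (LINT x:{-L..L}|lborel. D x)"
      by (rule set_int_subset_mono[OF Di]) (use sub Dnn in auto)
    have D01i: "set_integrable lborel {0..1} D" by (rule set_integrable_subset[OF Di]) (use sub in auto)
    have "\<delta> \<le> (LINT x:{0..1}|lborel. D x)"
    proof (cases "\<forall>x\<in>{0..1}. \<bar>u x\<bar> < c")
      case True
      have "(LINT (x::real):{0..1}|lborel. \<gamma>*\<beta>) \<le> (LINT x:{0..1}|lborel. D x)"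
      proof (rule set_integral_mono)
        show "set_integrable lborel {0..1} (\<lambda>x::real. \<gamma>*\<beta>)"
          by (rule borel_integrable_atLeastAtMost') simp
        show "set_integrable lborel {0..1} D" by (rule D01i)
        fix x :: real assume x: "x \<in> {0..1}"
        have "\<bar>u x\<bar> < c" using True x by blast
        then have "u x \<in> {-c..c}" by auto
        then have "\<gamma> \<le> G (u x) - G m" using \<gamma>(2) by blast
        then have "\<gamma>*\<beta> \<le> (G (u x) - G m) * b x"
          using \<beta>(2)[of x] x \<gamma> \<beta>(1) by (intro mult_mono) auto
        moreover have "0 \<le> (1/2) * (g x)\<^sup>2 * a x" using apos[of x] by simp
        ultimately show "\<gamma>*\<beta> \<le> D x" unfolding D_def by linarith
      qed
      then show ?thesis unfolding \<delta>_def by (simp add: set_integral_const)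
    next
      case False
      then obtain x0 where x0: "x0 \<in> {0..1}" "c \<le> \<bar>u x0\<bar>" by auto
      have x0p: "x0 > 0" using x0 u0 c by (cases "x0 = 0") auto
      have "u x0 - u 0 = (LINT t:{0..x0}|lborel. g t)"
        by (rule incr[OF gi urep]) (use x0 L in auto)
      then have ux0: "u x0 = (LINT t:{0..x0}|lborel. g t)" using u0 by simp
      have gi0: "set_integrable lborel {0..x0} g" by (rule set_integrable_subset[OF gi]) (use x0 L in auto)
      have g20: "set_integrable lborel {0..x0} (\<lambda>t. (g t)\<^sup>2)" by (rule set_integrable_subset[OF g2]) (use x0 L in auto)
      have g21: "set_integrable lborel {0..1} (\<lambda>t. (g t)\<^sup>2)" by (rule set_integrable_subset[OF g2]) (use L in auto)
      have "c\<^sup>2 \<le> (u x0)\<^sup>2"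
      proof -
        have "c\<^sup>2 \<le> \<bar>u x0\<bar>\<^sup>2" using x0(2) c by (intro power_mono) auto
        then show ?thesis by simp
      qed
      also have "\<dots> \<le> x0 * (LINT t:{0..x0}|lborel. (g t)\<^sup>2)"
        unfolding ux0 by (rule cs_ineq[OF gi0 g20 x0p])
      also have "\<dots> \<le> 1 * (LINT t:{0..x0}|lborel. (g t)\<^sup>2)"
      proof (rule mult_right_mono)
        show "x0 \<le> 1" using x0 by simp
        show "0 \<le> (LINT t:{0..x0}|lborel. (g t)\<^sup>2)"
          unfolding set_lebesgue_integral_def by (rule integral_nonneg_AE) (auto split: split_indicator)
      qed
      also have "\<dots> \<le> (LINT t:{0..1}|lborel. (g t)\<^sup>2)"
        using set_int_subset_mono[OF g21, of "{0..x0}"] x0 by simp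
      finally have c2: "c\<^sup>2 \<le> (LINT t:{0..1}|lborel. (g t)\<^sup>2)" .
      have "(LINT x:{0..1}|lborel. \<alpha>/2 * (g x)\<^sup>2) \<le> (LINT x:{0..1}|lborel. D x)"
      proof (rule set_integral_mono)
        show "set_integrable lborel {0..1} (\<lambda>x. \<alpha>/2 * (g x)\<^sup>2)" using g21 by simp
        show "set_integrable lborel {0..1} D" by (rule D01i)
        fix x :: real assume x: "x \<in> {0..1}"
        have "\<alpha>/2 * (g x)\<^sup>2 \<le> (1/2) * (g x)\<^sup>2 * a x"
        proof -
          have "(g x)\<^sup>2 * \<alpha> \<le> (g x)\<^sup>2 * a x" using \<alpha>(2)[OF x] by (intro mult_left_mono) auto
          then show ?thesis by (simp add: mult.commute)
        qed
        moreover have "0 \<le> (G (u x) - G m) * b x" using Gm[of "u x"] bpos[of x] by simp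
        ultimately show "\<alpha>/2 * (g x)\<^sup>2 \<le> D x" unfolding D_def by linarith
      qed
      moreover have "(LINT x:{0..1}|lborel. \<alpha>/2 * (g x)\<^sup>2) = \<alpha>/2 * (LINT x:{0..1}|lborel. (g x)\<^sup>2)"
        by simp
      moreover have "\<alpha>/2 * c\<^sup>2 \<le> \<alpha>/2 * (LINT x:{0..1}|lborel. (g x)\<^sup>2)"
        using c2 \<alpha> by (intro mult_left_mono) auto
      ultimately show ?thesis unfolding \<delta>_def by simp
    qed
    then show "G m * (LINT x:{-L..L}|lborel. b x) + \<delta> \<le> (LINT x:{-L..L}|lborel. (1/2) * (g x)\<^sup>2 * a x + G (u x) * b x)"
      using intE D01 unfolding E_def by simp
  qed
  then show ?thesis using \<delta> by blast
qed

lemma ind_restrict: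
  fixes k :: "real \<Rightarrow> real"
  assumes sub: "{p..q} \<subseteq> A" and ki: "set_integrable lborel {p..q} k"
  shows "set_integrable lborel A (\<lambda>x. indicator {p..q} x * k x)"
    and "(LINT x:A|lborel. indicator {p..q} x * k x) = (LINT x:{p..q}|lborel. k x)"
proof -
  have eq: "(\<lambda>x. indicator A x *\<^sub>R (indicator {p..q} x * k x)) = (\<lambda>x. indicator {p..q} x *\<^sub>R k x)"
  proof
    fix x show "indicator A x *\<^sub>R (indicator {p..q} x * k x) = indicator {p..q} x *\<^sub>R k x"
      using sub by (cases "x \<in> {p..q}") (auto split: split_indicator)
  qed
  show "set_integrable lborel A (\<lambda>x. indicator {p..q} x * k x)"
    using ki unfolding set_integrable_def eq .
  show "(LINT x:A|lborel. indicator {p..q} x * k x) = (LINT x:{p..q}|lborel. k x)"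
    unfolding set_lebesgue_integral_def eq ..
qed

lemma competitor:
  fixes a b G :: "real \<Rightarrow> real" and m L p q M :: real
  assumes ca: "continuous_on UNIV a" and cb: "continuous_on UNIV b" and cG: "continuous_on UNIV G"
    and apos: "\<And>x. a x > 0" and bpos: "\<And>x. b x > 0" and m: "m > 0"
    and Geven: "\<And>x. G (-x) = G x"
    and pq: "-L \<le> p" "p < q" "q \<le> L"
    and M: "\<And>s. s \<in> {-m..m} \<Longrightarrow> G s \<le> M"
  shows "\<exists>v. H1m m L v \<and> energy a b G L v \<le> G m * (LINT x:{-L..L}|lborel. b x)
      + 2*m\<^sup>2/(LINT x:{p..q}|lborel. 1/a x) + (M - G m) * (LINT x:{p..q}|lborel. b x)"
proof -
  have L: "L > 0" using pq by linarith
  have anz: "a x \<noteq> 0" for x using apos[of x] by simp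
  have cia: "continuous_on UNIV (\<lambda>x. 1 / a x)" using ca anz by (intro continuous_intros) auto
  define I where "I = (LINT x:{p..q}|lborel. 1/a x)"
  have Ii: "set_integrable lborel {p..q} (\<lambda>x. 1/a x)"
    by (rule borel_integrable_atLeastAtMost') (rule continuous_on_subset[OF cia], auto)
  have Ipos: "I > 0"
  proof -
    obtain \<kappa> where \<kappa>: "\<kappa> > 0" "\<And>x. x \<in> {p..q} \<Longrightarrow> \<kappa> \<le> 1/a x"
      using pos_lower[of "{p..q}" "\<lambda>x. 1/a x"] continuous_on_subset[OF cia] apos pq by force
    have "(LINT x:{p..q}|lborel. \<kappa>) \<le> I"
      unfolding I_def
      by (rule set_integral_mono[OF borel_integrable_atLeastAtMost' Ii]) (use \<kappa> in auto)
    moreover have "(LINT x:{p..q}|lborel. \<kappa>) = (q - p) * \<kappa>" using pq by (simp add: set_integral_const)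
    moreover have "(q - p) * \<kappa> > 0" using pq \<kappa> by simp
    ultimately show ?thesis by linarith
  qed
  define h where "h x = 2*m/(I * a x)" for x
  have ch: "continuous_on UNIV h" unfolding h_def using ca anz Ipos by (intro continuous_intros) auto
  have hi: "set_integrable lborel {p..q} h"
    by (rule borel_integrable_atLeastAtMost') (rule continuous_on_subset[OF ch], auto)
  have h2i: "set_integrable lborel {p..q} (\<lambda>x. (h x)\<^sup>2)"
    by (rule borel_integrable_atLeastAtMost') (intro continuous_intros continuous_on_subset[OF ch], auto)
  define gv where "gv x = indicator {p..q} x * h x" for x
  have sub: "{p..q} \<subseteq> {-L..L}" using pq by auto
  have gvm: "gv \<in> borel_measurable lborel"
    unfolding gv_def using borel_measurable_continuous_onI[OF ch] by simp
  have gvi: "set_integrable lborel {-L..L} gv"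
    unfolding gv_def by (rule ind_restrict(1)[OF sub hi])
  have gv2eq: "(gv x)\<^sup>2 = indicator {p..q} x * (h x)\<^sup>2" for x
    unfolding gv_def by (simp split: split_indicator)
  have gv2i: "set_integrable lborel {-L..L} (\<lambda>x. (gv x)\<^sup>2)"
    unfolding gv2eq by (rule ind_restrict(1)[OF sub h2i])
  have hI: "(LINT x:{p..q}|lborel. h x) = 2*m"
  proof -
    have "(LINT x:{p..q}|lborel. h x) = (LINT x:{p..q}|lborel. (2*m/I) * (1/a x))"
      by (rule set_lebesgue_integral_cong) (auto simp: h_def)
    also have "\<dots> = (2*m/I) * I" unfolding I_def by (rule set_integral_mult_right)
    also have "\<dots> = 2*m" using Ipos by simp
    finally show ?thesis .
  qed
  have gvL: "(LINT x:{-L..L}|lborel. gv x) = 2*m"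
    unfolding gv_def ind_restrict(2)[OF sub hi] hI ..
  define v :: "real \<Rightarrow> real" where "v x = -m + (LBINT t=-L..x. gv t)" for x
  have vL0: "v (-L) = -m" unfolding v_def by simp
  have vrep: "\<forall>x\<in>{-L..L}. v x = v (-L) + (LBINT t=-L..x. gv t)" unfolding vL0 v_def by simp
  have vL: "v L = m"
    unfolding v_def using L gvL by (simp add: interval_integral_Icc)
  have H1v: "H1m m L v"
    unfolding H1m_def H1_def using gvm gvi gv2i vrep vL0 vL by blast
  have gvnn: "0 \<le> gv x" for x unfolding gv_def h_def using apos[of x] Ipos m
    by (simp split: split_indicator)
  have nnint: "0 \<le> (LINT t:{x..y}|lborel. gv t)" for x y
    unfolding set_lebesgue_integral_def by (rule integral_nonneg_AE) (use gvnn in \<open>auto split: split_indicator\<close>)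
  have zint: "(LINT t:{x..y}|lborel. gv t) = 0" if "{x..y} \<inter> {p..q} = {}" for x y
  proof -
    have "(LINT t:{x..y}|lborel. gv t) = (LINT t:{x..y}|lborel. 0)"
      by (rule set_lebesgue_integral_cong) (use that in \<open>auto simp: gv_def\<close>)
    then show ?thesis by simp
  qed
  have vrange: "v x \<in> {-m..m}" if x: "x \<in> {-L..L}" for x
  proof -
    have "v x - v (-L) = (LINT t:{-L..x}|lborel. gv t)" by (rule incr[OF gvi vrep]) (use x in auto)
    moreover have "v L - v x = (LINT t:{x..L}|lborel. gv t)" by (rule incr[OF gvi vrep]) (use x in auto)
    ultimately show ?thesis using nnint[of "-L" x] nnint[of x L] vL0 vL by auto
  qed
  have vout: "G (v x) = G m" if x: "x \<in> {-L..L}" "x \<notin> {p..q}" for x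
  proof (cases "x < p")
    case True
    have "v x - v (-L) = (LINT t:{-L..x}|lborel. gv t)" by (rule incr[OF gvi vrep]) (use x in auto)
    also have "\<dots> = 0" using True by (intro zint) auto
    finally have "v x = -m" using vL0 by simp
    then show ?thesis using Geven[of m] by simp
  next
    case False
    then have xq: "x > q" using x by auto
    have "v L - v x = (LINT t:{x..L}|lborel. gv t)" by (rule incr[OF gvi vrep]) (use x in auto)
    also have "\<dots> = 0" using xq by (intro zint) auto
    finally have "v x = m" using vL by simp
    then show ?thesis by simp
  qed
  define k where "k x = 2*m\<^sup>2/I\<^sup>2 * (1/a x) + (M - G m) * b x" for x
  have ki: "set_integrable lborel {p..q} k"
    unfolding k_def
    by (rule borel_integrable_atLeastAtMost') (intro continuous_intros continuous_on_subset[OF cia] continuous_on_subset[OF cb], auto)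
  have bi: "set_integrable lborel {-L..L} b"
    by (rule borel_integrable_atLeastAtMost') (rule continuous_on_subset[OF cb], auto)
  have bpq: "set_integrable lborel {p..q} b"
    by (rule borel_integrable_atLeastAtMost') (rule continuous_on_subset[OF cb], auto)
  have en: "energy a b G L v = (LINT x:{-L..L}|lborel. (1/2) * (gv x)\<^sup>2 * a x + G (v x) * b x)"
    and eni: "set_integrable lborel {-L..L} (\<lambda>x. (1/2) * (gv x)\<^sup>2 * a x + G (v x) * b x)"
    using energy_repr[OF ca cb cG L gvm gvi gv2i vrep] by auto
  have "(LINT x:{-L..L}|lborel. (1/2) * (gv x)\<^sup>2 * a x + G (v x) * b x)
      \<le> (LINT x:{-L..L}|lborel. G m * b x + indicator {p..q} x * k x)"
  proof (rule set_integral_mono[OF eni])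
    show "set_integrable lborel {-L..L} (\<lambda>x. G m * b x + indicator {p..q} x * k x)"
      using bi ind_restrict(1)[OF sub ki] by (intro set_integral_add(1)) auto
    fix x assume x: "x \<in> {-L..L}"
    show "(1/2) * (gv x)\<^sup>2 * a x + G (v x) * b x \<le> G m * b x + indicator {p..q} x * k x"
    proof (cases "x \<in> {p..q}")
      case True
      have "(1/2) * (gv x)\<^sup>2 * a x = 2*m\<^sup>2/I\<^sup>2 * (1/a x)"
        unfolding gv_def h_def using True anz[of x] Ipos by (simp add: field_simps power2_eq_square)
      moreover have "G (v x) * b x \<le> M * b x"
        using M[OF vrange[OF x]] bpos[of x] by (intro mult_right_mono) auto
      ultimately show ?thesis using True unfolding k_def by (simp add: algebra_simps)
    next
      case False
      then show ?thesis using vout[OF x False] unfolding gv_def by simp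
    qed
  qed
  also have "(LINT x:{-L..L}|lborel. G m * b x + indicator {p..q} x * k x)
      = G m * (LINT x:{-L..L}|lborel. b x) + (LINT x:{p..q}|lborel. k x)"
    using bi ind_restrict[OF sub ki] by (subst set_integral_add(2)) auto
  also have "(LINT x:{p..q}|lborel. k x) = 2*m\<^sup>2/I\<^sup>2 * I + (M - G m) * (LINT x:{p..q}|lborel. b x)"
  proof -
    have "(LINT x:{p..q}|lborel. k x) = (LINT x:{p..q}|lborel. 2*m\<^sup>2/I\<^sup>2 * (1/a x))
          + (LINT x:{p..q}|lborel. (M - G m) * b x)"
      unfolding k_def
    proof (rule set_integral_add(2))
      show "set_integrable lborel {p..q} (\<lambda>x. 2*m\<^sup>2/I\<^sup>2 * (1/a x))"
        by (rule set_integrable_mult_right) (rule Ii)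
      show "set_integrable lborel {p..q} (\<lambda>x. (M - G m) * b x)"
        by (rule set_integrable_mult_right) (rule bpq)
    qed
    also have "(LINT x:{p..q}|lborel. 2*m\<^sup>2/I\<^sup>2 * (1/a x)) = 2*m\<^sup>2/I\<^sup>2 * I"
      unfolding I_def by (rule set_integral_mult_right)
    also have "(LINT x:{p..q}|lborel. (M - G m) * b x) = (M - G m) * (LINT x:{p..q}|lborel. b x)"
      by (rule set_integral_mult_right)
    finally show ?thesis .
  qed
  also have "2*m\<^sup>2/I\<^sup>2 * I = 2*m\<^sup>2/I" using Ipos by (simp add: power2_eq_square)
  finally have "energy a b G L v \<le> G m * (LINT x:{-L..L}|lborel. b x) + (2*m\<^sup>2/I + (M - G m) * (LINT x:{p..q}|lborel. b x))"
    using en by simp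
  then show ?thesis using H1v unfolding I_def by (intro exI[of _ v]) (simp add: add.assoc)
qed

lemma interval_int:
  fixes J :: "real set" and f :: "real \<Rightarrow> real"
  assumes iJ: "is_interval J" and bJ: "bounded J" and ne: "J \<noteq> {}"
  shows "(LINT x:J|lborel. f x) = (LINT x:{Inf J..Sup J}|lborel. f x)"
proof -
  have ba: "bdd_above J" "bdd_below J" using bJ by (auto intro: bounded_imp_bdd_above bounded_imp_bdd_below)
  have s1: "J \<subseteq> {Inf J..Sup J}" using ba by (auto intro: cInf_lower cSup_upper)
  have s2: "{Inf J<..<Sup J} \<subseteq> J"
  proof
    fix y assume y: "y \<in> {Inf J<..<Sup J}"
    have "Inf J < y" "y < Sup J" using y by auto
    then have "\<exists>x\<in>J. x < y" "\<exists>x\<in>J. y < x"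
      using cInf_less_iff[OF ne ba(2), of y] less_cSup_iff[OF ne ba(1), of y] by blast+
    then obtain x1 x2 where x1: "x1 \<in> J" "x1 < y" and x2: "x2 \<in> J" "y < x2" by blast
    show "y \<in> J" using iJ x1 x2 unfolding is_interval_1 by (meson less_imp_le)
  qed
  show ?thesis
  proof (rule set_integral_discrete_difference[where X="{Inf J, Sup J}"])
    show "(J - {Inf J..Sup J}) \<union> ({Inf J..Sup J} - J) \<subseteq> {Inf J, Sup J}"
    proof
      fix x assume x: "x \<in> (J - {Inf J..Sup J}) \<union> ({Inf J..Sup J} - J)"
      then have "x \<in> {Inf J..Sup J}" "x \<notin> J" using s1 by auto
      then have "\<not> (Inf J < x \<and> x < Sup J)" "Inf J \<le> x" "x \<le> Sup J" using s2 by auto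
      then show "x \<in> {Inf J, Sup J}" by auto
    qed
  qed simp_all
qed

lemma int_degenerate:
  fixes f :: "real \<Rightarrow> real"
  assumes "q \<le> p"
  shows "(LINT x:{p..q}|lborel. f x) = 0"
proof -
  have "(LINT x:{p..q}|lborel. f x) = (LINT x:{}|lborel. f x)"
  proof (rule set_integral_discrete_difference[where X="{p}"])
    show "({p..q} - {}) \<union> ({} - {p..q}) \<subseteq> {p}"
    proof
      fix x assume "x \<in> ({p..q} - {}) \<union> ({} - {p..q})"
      then have "p \<le> x" "x \<le> q" by auto
      then show "x \<in> {p}" using assms by simp
    qed
  qed simp_all
  then show ?thesis unfolding set_lebesgue_integral_def by simp
qed

theorem proposition1p6:
  fixes a b G :: "real \<Rightarrow> real" and m :: real and J :: "nat \<Rightarrow> real set"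
  assumes "continuous_on UNIV a" "continuous_on UNIV b" "continuous_on UNIV G"
    and "\<And>x. a (-x) = a x" "\<And>x. b (-x) = b x" "\<And>x. G (-x) = G x"
    and "\<And>x. a x > 0" "\<And>x. b x > 0"
    and "m > 0"
    and "\<And>s. G s \<ge> G m"
    and "\<And>s. s \<in> {-m<..<m} \<Longrightarrow> G s > G m"
    and "\<And>n. is_interval (J n)" "\<And>n. bounded (J n)"
    and "filterlim (\<lambda>n. LINT x:J n|lborel. 1 / a x) at_top sequentially"
    and "(\<lambda>n. LINT x:J n|lborel. b x) \<longlonglongrightarrow> 0"
  shows "\<exists>L0>0. \<forall>L>L0. \<not> (\<exists>u. is_minimizer a b G m L u \<and> odd_on L u)"
proof -
  note ca = assms(1) and cb = assms(2) and cG = assms(3) and Geven = assms(6)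
    and apos = assms(7) and bpos = assms(8) and m = assms(9) and Gm = assms(10) and Gs = assms(11)
    and iJ = assms(12) and bJ = assms(13) and IJ = assms(14) and BJ = assms(15)
  obtain \<delta> where \<delta>: "\<delta> > 0" and LBd: "LBP a b G m \<delta>"
    using lower_bound[OF ca cb cG apos bpos m Gm Gs] by blast
  note LB = LBd[unfolded LBP_def, rule_format (no_asm)]
  have "bounded (G ` {-m..m})"
    by (intro compact_imp_bounded compact_continuous_image continuous_on_subset[OF cG]) auto
  then obtain M where M0: "\<And>s. s \<in> {-m..m} \<Longrightarrow> \<bar>G s\<bar> \<le> M" unfolding bounded_real by blast
  have M: "\<And>s. s \<in> {-m..m} \<Longrightarrow> G s \<le> M" using M0 by fastforce
  have ev1: "eventually (\<lambda>n. 4*m\<^sup>2/\<delta> + 1 \<le> (LINT x:J n|lborel. 1 / a x)) sequentially"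
    using IJ unfolding filterlim_at_top by blast
  have "(\<lambda>n. (M - G m) * (LINT x:J n|lborel. b x)) \<longlonglongrightarrow> (M - G m) * 0"
    by (intro tendsto_intros BJ)
  then have ev2: "eventually (\<lambda>n. (M - G m) * (LINT x:J n|lborel. b x) < \<delta>/2) sequentially"
    using \<delta> by (intro order_tendstoD(2)) auto
  obtain n where n1: "4*m\<^sup>2/\<delta> + 1 \<le> (LINT x:J n|lborel. 1 / a x)"
    and n2: "(M - G m) * (LINT x:J n|lborel. b x) < \<delta>/2"
    using eventually_conj[OF ev1 ev2] unfolding eventually_sequentially by blast
  define p where "p = Inf (J n)"
  define q where "q = Sup (J n)"
  have Jne: "J n \<noteq> {}"
  proof
    assume "J n = {}"
    then have "(LINT x:J n|lborel. 1 / a x) = 0" by (simp add: set_lebesgue_integral_def)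
    moreover have "4*m\<^sup>2/\<delta> \<ge> 0" using \<delta> by simp
    ultimately show False using n1 by linarith
  qed
  have Jeq: "(LINT x:J n|lborel. f x) = (LINT x:{p..q}|lborel. f x)" for f :: "real \<Rightarrow> real"
    unfolding p_def q_def by (rule interval_int[OF iJ bJ Jne])
  define I where "I = (LINT x:{p..q}|lborel. 1 / a x)"
  define B where "B = (LINT x:{p..q}|lborel. b x)"
  have I1: "4*m\<^sup>2/\<delta> + 1 \<le> I" using n1 unfolding I_def Jeq .
  have B1: "(M - G m) * B < \<delta>/2" using n2 unfolding B_def Jeq .
  have pq: "p < q"
  proof (rule ccontr)
    assume "\<not> p < q"
    then have "I = 0" unfolding I_def by (intro int_degenerate) auto
    moreover have "4*m\<^sup>2/\<delta> \<ge> 0" using \<delta> by simp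
    ultimately show False using I1 by linarith
  qed
  have Ipos: "I > 0" using I1 \<delta> by (smt (verit) divide_nonneg_pos zero_le_power2)
  have Ismall: "2*m\<^sup>2/I < \<delta>/2"
  proof -
    have "4*m\<^sup>2/\<delta> < I" using I1 by linarith
    then have "4*m\<^sup>2 < I * \<delta>" using \<delta> by (simp add: divide_less_eq)
    then show ?thesis using Ipos \<delta> by (simp add: divide_less_eq field_simps)
  qed
  define L0 where "L0 = max \<bar>p\<bar> \<bar>q\<bar> + 1"
  show ?thesis
  proof (intro exI[of _ L0] conjI allI impI notI)
    show "L0 > 0" unfolding L0_def by simp
    fix L assume L: "L > L0"
    assume "\<exists>u. is_minimizer a b G m L u \<and> odd_on L u"
    then obtain u where mini: "is_minimizer a b G m L u" and odd: "odd_on L u" by blast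
    have L1: "L \<ge> 1" "L > 0" using L unfolding L0_def by auto
    have pqL: "-L \<le> p" "q \<le> L" using L unfolding L0_def by auto
    from mini have H1u: "H1m m L u" and minP: "\<And>v. H1m m L v \<Longrightarrow> energy a b G L u \<le> energy a b G L v"
      unfolding is_minimizer_def by auto
    from H1u obtain g where gm: "g \<in> borel_measurable lborel" and gi: "set_integrable lborel {-L..L} g"
      and g2: "set_integrable lborel {-L..L} (\<lambda>x. (g x)\<^sup>2)"
      and urep: "\<forall>x\<in>{-L..L}. u x = u (-L) + (LBINT t=-L..x. g t)"
      unfolding H1m_def H1_def by blast
    have u0: "u 0 = 0"
    proof -
      have z: "(0::real) \<in> {-L..L}" using L1 by auto
      have "u (-0) = - u 0" using odd z unfolding odd_on_def by blast
      then show ?thesis by simp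
    qed
    have Eu: "energy a b G L u = (LINT x:{-L..L}|lborel. (1/2) * (g x)\<^sup>2 * a x + G (u x) * b x)"
      and Eui: "set_integrable lborel {-L..L} (\<lambda>x. (1/2) * (g x)\<^sup>2 * a x + G (u x) * b x)"
      using energy_repr[OF ca cb cG L1(2) gm gi g2 urep] by auto
    have lo: "G m * (LINT x:{-L..L}|lborel. b x) + \<delta> \<le> energy a b G L u"
      unfolding Eu by (rule LB[OF L1(1) gi g2 urep Eui u0])
    obtain v where H1v: "H1m m L v" and Ev: "energy a b G L v \<le> G m * (LINT x:{-L..L}|lborel. b x)
        + 2*m\<^sup>2/I + (M - G m) * B"
      using competitor[OF ca cb cG apos bpos m Geven pqL(1) pq pqL(2) M] unfolding I_def B_def by blast
    have "energy a b G L u \<le> energy a b G L v" by (rule minP[OF H1v])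
    then show False using lo Ev Ismall B1 by linarith
  qed
qed

end
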